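(* Let $M\in\mathrm{SL}(2,\mathbb Z)$ be a hyperbolic matrix, $N\in\mathbb N$, and $\{\phi_j\}_{j=1}^N$ an eigenbasis of $\hat M$ in $\mathcal H_N$ (setting in the context). Let $1\le p<\infty$, $L>0$, and let $D=D(r)$ satisfy $1/D=o(r)$ as $r\to0$; let $b^\pm_{x,r}$ be the majorant/minorant trigonometric polynomials of the discs $B_2(x,r)\subset\mathbb T^2$ described in the context. Define $$\mathcal S^\pm(N,L):=\Big\{1\le j\le N:\ \sup_{x\in\mathbb T^2}\Big|\frac{\langle\mathrm{Op}_N(b^\pm_{x,r})\phi_j,\phi_j\rangle}{\mu(b^\pm_{x,r})}-1\Big|\ge L\Big\}.$$ Then $$\frac{\#\mathcal S^\pm(N,L)}{N}\le\frac{c\,D^{2(p-1)}}{L^p}\sum_{n\in\mathbb Z^2,\,1\le|n|\le D}V_p\big(N,\hat T_N(n)\big),$$ where $c$ depends on $p$.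
   Context: $M=\exp\begin{pmatrix}\gamma&\beta\\-\alpha&-\gamma\end{pmatrix}\in\mathrm{SL}(2,\mathbb Z)$, $\gamma^2>\alpha\beta$, acting on row vectors of $\mathbb T^2=\mathbb R^2/\mathbb Z^2$. Symplectic product $u\wedge v=u_2v_1-u_1v_2$. With $h=1/N$: $\hat q\psi=q\psi$, $\hat p\psi=\frac{h}{2\pi i}\psi'$, $\hat T_v=\exp(-\frac{2\pi i}{h}(v_1\hat p-v_2\hat q))$, $\hat H=\frac12\alpha\hat q^2+\frac12\beta\hat p^2+\frac\gamma2(\hat q\hat p+\hat p\hat q)$, $\hat M=e^{-2\pi i\hat H/h}$ acting on the $N$-dimensional Hilbert space $\mathcal H_N$ of distributions $\psi(q)=\sum_{k\in\mathbb Z}\Psi(k)\delta(q-(k+\kappa_1)/N)$, $\Psi(k+N)=e^{-2\pi i\kappa_2}\Psi(k)$ (fixed $\kappa\in\mathbb T^2$ chosen so that $\hat M$ preserves $\mathcal H_N$), inner product $\frac1N\sum_{k=1}^N\Psi(k)\overline{\Phi(k)}$; an eigenbasis is an orthonormal basis of eigenvectors of $\hat M$. $\hat T_N(n):=\hat T_{n/N}$; $\mathrm{Op}_N(a)=\sum_n\tilde a(n)\hat T_N(n)$ for $a(x)=\sum_n\tilde a(n)e^{2\pi i(n\wedge x)}$; $\mu(a)=\int_{\mathbb T^2}a\,dq\,dp=\tilde a(0)$. $p$-moment: $V_p(N,\hat T_N(n)):=\frac1N\sum_{j=1}^N|\langle\hat T_N(n)\phi_j,\phi_j\rangle-\mu(e^{2\pi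 i(n\wedge\cdot)})|^p$, which for $n\neq0$ equals $\frac1N\sum_j|\langle\hat T_N(n)\phi_j,\phi_j\rangle|^p$. Majorants/minorants: with $rD\ge1$, $a_r^\pm$ are trigonometric polynomials on $\mathbb T^2$ with $a_r^-\le\chi_{B_2(0,r)}\le a_r^+$, $\widetilde{a_r^\pm}(n)=0$ for $|n|\ge D$, $\widetilde{a_r^\pm}(0)=\mathrm{Vol}(B_2(0,r))+O(r/D)$, $|\widetilde{a_r^\pm}(n)|\le c_0r^2$ for all $n$ with an absolute constant $c_0$; $b^\pm_{x,r}(y):=a_r^\pm(y-x)$. *)

theory Defs
  imports "HOL-Analysis.Analysis" "HOL-Library.Landau_Symbols"
begin

text \<open>Lattice points n in Z^2 are row vectors of type int^2; points of the torus
  R^2/Z^2 are represented by points of R^2 (all functions below are Z^2-periodic).\<close>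

definition inorm :: "int^2 \<Rightarrow> real" where
  "inorm n = sqrt (real_of_int (n$1)^2 + real_of_int (n$2)^2)"

definition wedge :: "int^2 \<Rightarrow> real^2 \<Rightarrow> real" where
  "wedge u v = real_of_int (u$2) * v$1 - real_of_int (u$1) * v$2"

text \<open>M = exp of a traceless real matrix with gamma^2 > alpha beta, M in SL(2,Z):
  equivalently det M = 1 and trace M > 2 (hyperbolic, positive trace).\<close>
definition hyperbolic_SL2Z :: "int^2^2 \<Rightarrow> bool" where
  "hyperbolic_SL2Z M \<longleftrightarrow> det M = 1 \<and> trace M > 2"

definition coeff_supp :: "(int^2 \<Rightarrow> complex) \<Rightarrow> (int^2) set" where
  "coeff_supp c = {n. c n \<noteq> 0}"

definition trig_eval :: "(int^2 \<Rightarrow> complex) \<Rightarrow> real^2 \<Rightarrow> complex" where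
  "trig_eval c x = (\<Sum>n\<in>coeff_supp c. c n * exp (2 * pi * \<i> * complex_of_real (wedge n x)))"

text \<open>Fourier coefficients of the translate y \<mapsto> a(y - x) (the function b_{x,r}).\<close>
definition shift_coeff :: "(int^2 \<Rightarrow> complex) \<Rightarrow> real^2 \<Rightarrow> int^2 \<Rightarrow> complex" where
  "shift_coeff c x n = c n * exp (- 2 * pi * \<i> * complex_of_real (wedge n x))"

definition disc_ind :: "real \<Rightarrow> real^2 \<Rightarrow> real" where
  "disc_ind r x = (if \<exists>k::int^2. (x$1 - real_of_int (k$1))^2 + (x$2 - real_of_int (k$2))^2 < r^2
                   then 1 else 0)"

text \<open>mu(a) = integral of a over the torus = zeroth Fourier coefficient.\<close>
definition mu :: "(int^2 \<Rightarrow> complex) \<Rightarrow> complex" where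
  "mu c = c 0"

text \<open>Required for 0 < r <= 1/2 (so that Vol(B_2(0,r)) = pi r^2) with r D(r) >= 1.\<close>
definition majorant_family ::
  "real \<Rightarrow> real \<Rightarrow> (real \<Rightarrow> real) \<Rightarrow> (real \<Rightarrow> int^2 \<Rightarrow> complex) \<Rightarrow> (real \<Rightarrow> int^2 \<Rightarrow> complex) \<Rightarrow> bool"
  where
  "majorant_family c0 C1 D ap am \<longleftrightarrow>
     (\<forall>r. 0 < r \<and> r \<le> 1/2 \<and> 1 \<le> r * D r \<longrightarrow>
        (\<forall>x. Im (trig_eval (ap r) x) = 0 \<and> Im (trig_eval (am r) x) = 0 \<and>
             Re (trig_eval (am r) x) \<le> disc_ind r x \<and> disc_ind r x \<le> Re (trig_eval (ap r) x)) \<and>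
        (\<forall>n. D r \<le> inorm n \<longrightarrow> ap r n = 0 \<and> am r n = 0) \<and>
        cmod (ap r 0 - complex_of_real (pi * r^2)) \<le> C1 * r / D r \<and>
        cmod (am r 0 - complex_of_real (pi * r^2)) \<le> C1 * r / D r \<and>
        (\<forall>n. cmod (ap r n) \<le> c0 * r^2 \<and> cmod (am r n) \<le> c0 * r^2))"

text \<open>Elements of H_N are represented by their coefficient sequences Psi : Z \<Rightarrow> C,
  psi(q) = sum_k Psi(k) delta(q - (k + kappa1)/N), with Psi(k+N) = e^{-2 pi i kappa2} Psi(k).\<close>
definition inHN :: "nat \<Rightarrow> real^2 \<Rightarrow> (int \<Rightarrow> complex) \<Rightarrow> bool" where
  "inHN N \<kappa> \<Psi> \<longleftrightarrow> (\<forall>k. \<Psi> (k + int N) = exp (- 2 * pi * \<i> * complex_of_real (\<kappa>$2)) * \<Psi> k)"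

definition innerN :: "nat \<Rightarrow> (int \<Rightarrow> complex) \<Rightarrow> (int \<Rightarrow> complex) \<Rightarrow> complex" where
  "innerN N \<Psi> \<Phi> = (1 / of_nat N) * (\<Sum>k=1..int N. \<Psi> k * cnj (\<Phi> k))"

text \<open>T_N(n) = T_{n/N} with h = 1/N, computed on coefficient sequences:
  T_v psi(q) = e^{(2 pi i/h) v2 (q - v1/2)} psi(q - v1).\<close>
definition TN :: "nat \<Rightarrow> real^2 \<Rightarrow> int^2 \<Rightarrow> (int \<Rightarrow> complex) \<Rightarrow> (int \<Rightarrow> complex)" where
  "TN N \<kappa> n \<Psi> = (\<lambda>k. exp (2 * pi * \<i> / of_nat N *
        complex_of_real (real_of_int (n$2) * (real_of_int k + \<kappa>$1)
                         - real_of_int (n$1 * n$2) / 2)) * \<Psi> (k - n$1))"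

definition OpN :: "nat \<Rightarrow> real^2 \<Rightarrow> (int^2 \<Rightarrow> complex) \<Rightarrow> (int \<Rightarrow> complex) \<Rightarrow> (int \<Rightarrow> complex)" where
  "OpN N \<kappa> c \<Psi> = (\<lambda>k. \<Sum>n\<in>coeff_supp c. c n * TN N \<kappa> n \<Psi> k)"

text \<open>U is (a restriction to H_N of) the quantization hat M: a unitary operator of H_N onto
  itself satisfying exact Egorov  U T_N(n) = T_N(nM) U.  By irreducibility of
  n \<mapsto> T_N(n) on H_N this determines U up to a scalar (or up to inversion, for the
  opposite sign convention), hence determines the eigenbases of hat M.\<close>
definition quantizes :: "nat \<Rightarrow> real^2 \<Rightarrow> int^2^2 \<Rightarrow> ((int \<Rightarrow> complex) \<Rightarrow> (int \<Rightarrow> complex)) \<Rightarrow> bool" where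
  "quantizes N \<kappa> M U \<longleftrightarrow>
     (\<forall>\<Psi>. inHN N \<kappa> \<Psi> \<longrightarrow> inHN N \<kappa> (U \<Psi>)) \<and>
     (\<forall>\<Psi> \<Phi> a b. inHN N \<kappa> \<Psi> \<longrightarrow> inHN N \<kappa> \<Phi> \<longrightarrow>
         U (\<lambda>k. a * \<Psi> k + b * \<Phi> k) = (\<lambda>k. a * U \<Psi> k + b * U \<Phi> k)) \<and>
     (\<forall>\<Psi> \<Phi>. inHN N \<kappa> \<Psi> \<longrightarrow> inHN N \<kappa> \<Phi> \<longrightarrow> innerN N (U \<Psi>) (U \<Phi>) = innerN N \<Psi> \<Phi>) \<and>
     (\<forall>\<Phi>. inHN N \<kappa> \<Phi> \<longrightarrow> (\<exists>\<Psi>. inHN N \<kappa> \<Psi> \<and> U \<Psi> = \<Phi>)) \<and>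
     (\<forall>n \<Psi>. inHN N \<kappa> \<Psi> \<longrightarrow> U (TN N \<kappa> n \<Psi>) = TN N \<kappa> (n v* M) (U \<Psi>))"

definition eigenbasis :: "nat \<Rightarrow> real^2 \<Rightarrow> ((int \<Rightarrow> complex) \<Rightarrow> (int \<Rightarrow> complex)) \<Rightarrow> (nat \<Rightarrow> int \<Rightarrow> complex) \<Rightarrow> bool" where
  "eigenbasis N \<kappa> U \<phi> \<longleftrightarrow>
     (\<forall>j\<in>{1..N}. inHN N \<kappa> (\<phi> j) \<and> (\<exists>ev. U (\<phi> j) = (\<lambda>k. ev * \<phi> j k))) \<and>
     (\<forall>i\<in>{1..N}. \<forall>j\<in>{1..N}. innerN N (\<phi> i) (\<phi> j) = (if i = j then 1 else 0))"

text \<open>p-moment V_p(N, T_N(n)); mu(e^{2 pi i (n wedge .)}) is 1 for n = 0 and 0 otherwise.\<close>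
definition Vp :: "nat \<Rightarrow> real^2 \<Rightarrow> (nat \<Rightarrow> int \<Rightarrow> complex) \<Rightarrow> real \<Rightarrow> int^2 \<Rightarrow> real" where
  "Vp N \<kappa> \<phi> p n = (1 / real N) * (\<Sum>j=1..N.
       cmod (innerN N (TN N \<kappa> n (\<phi> j)) (\<phi> j) - (if n = 0 then 1 else 0)) powr p)"

definition Sset :: "nat \<Rightarrow> real^2 \<Rightarrow> (nat \<Rightarrow> int \<Rightarrow> complex) \<Rightarrow> (int^2 \<Rightarrow> complex) \<Rightarrow> real \<Rightarrow> nat set" where
  "Sset N \<kappa> \<phi> c L = {j\<in>{1..N}.
      (SUP x. cmod (innerN N (OpN N \<kappa> (shift_coeff c x) (\<phi> j)) (\<phi> j) / mu (shift_coeff c x) - 1)) \<ge> L}"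

end

theory Submission
  imports Defs
begin


lemma powr_convex0:
  assumes "(p::real) \<ge> 1" shows "convex_on {0..} (\<lambda>x::real. x powr p)"
proof (rule convex_onI)
  show "convex {0::real..}" by simp
  fix t x y :: real assume t: "0 < t" "t < 1" and xy: "x \<in> {0..}" "y \<in> {0..}"
  have conv: "convex_on {0<..} (\<lambda>x::real. x powr p)" using powr_convex[OF assms] .
  have tp: "t powr p \<le> t"
    using powr_mono'[of 1 p t] t assms by simp
  have tp2: "(1-t) powr p \<le> 1-t"
    using powr_mono'[of 1 p "1-t"] t assms by simp
  show "((1 - t) *\<^sub>R x + t *\<^sub>R y) powr p \<le> (1 - t) * x powr p + t * y powr p"
  proof (cases "x = 0")
    case True
    then show ?thesis using xy t tp assms
      by (simp add: powr_mult mult_right_mono)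
  next
    case x0: False
    show ?thesis
    proof (cases "y = 0")
      case True
      then show ?thesis using xy t tp2 assms
        by (simp add: powr_mult mult_right_mono)
    next
      case False
      then show ?thesis using x0 xy t conv by (auto simp: convex_on_def)
    qed
  qed
qed

lemma holder_sum:
  fixes y :: "'a \<Rightarrow> real"
  assumes "finite B" "\<And>i. i \<in> B \<Longrightarrow> y i \<ge> 0" "p \<ge> 1"
  shows "(\<Sum>i\<in>B. y i) powr p \<le> real (card B) powr (p-1) * (\<Sum>i\<in>B. y i powr p)"
proof (cases "B = {}")
  case True then show ?thesis by simp
next
  case False
  define m where "m = real (card B)"
  have m: "m > 0" using False assms(1) by (simp add: m_def card_gt_0_iff)
  have "(\<Sum>i\<in>B. (1/m) *\<^sub>R y i) powr p \<le> (\<Sum>i\<in>B. (1/m) * y i powr p)"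
    by (rule convex_on_sum[OF assms(1) False powr_convex0[OF assms(3)]])
       (use m assms in \<open>auto simp: m_def\<close>)
  moreover have "(\<Sum>i\<in>B. (1/m) *\<^sub>R y i) = (\<Sum>i\<in>B. y i) / m" by (simp add: sum_divide_distrib)
  moreover have "(\<Sum>i\<in>B. (1/m) * y i powr p) = (\<Sum>i\<in>B. y i powr p) / m" by (simp add: sum_divide_distrib)
  ultimately have "((\<Sum>i\<in>B. y i) / m) powr p \<le> (\<Sum>i\<in>B. y i powr p) / m" by simp
  hence "(\<Sum>i\<in>B. y i) powr p / m powr p \<le> (\<Sum>i\<in>B. y i powr p) / m"
    using m assms by (simp add: powr_divide sum_nonneg)
  hence "(\<Sum>i\<in>B. y i) powr p \<le> m powr p / m * (\<Sum>i\<in>B. y i powr p)"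
    using m by (simp add: field_simps)
  moreover have "m powr p / m = m powr (p-1)" using m by (simp add: powr_diff)
  ultimately have "(\<Sum>i\<in>B. y i) powr p \<le> m powr (p-1) * (\<Sum>i\<in>B. y i powr p)" by metis
  thus ?thesis by (simp add: m_def)
qed



lemma abs_comp_le_inorm: "\<bar>real_of_int (n$i)\<bar> \<le> inorm n"
proof -
  have "(real_of_int (n$i))^2 \<le> real_of_int (n$1)^2 + real_of_int (n$2)^2"
    using exhaust_2[of i] by auto
  hence "sqrt ((real_of_int (n$i))^2) \<le> sqrt (real_of_int (n$1)^2 + real_of_int (n$2)^2)"
    by (rule real_sqrt_le_mono)
  thus ?thesis unfolding inorm_def by simp
qed

lemma inorm_zero_iff: "inorm n = 0 \<longleftrightarrow> n = 0"
proof
  assume "inorm n = 0"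
  hence "n$i = 0" for i using abs_comp_le_inorm[of n i] by simp
  thus "n = 0" by (simp add: vec_eq_iff)
qed (simp add: inorm_def)

lemma inorm_ge1: "n \<noteq> 0 \<Longrightarrow> 1 \<le> inorm n"
proof -
  assume "n \<noteq> 0"
  then obtain i where "n$i \<noteq> 0" by (auto simp: vec_eq_iff)
  hence "1 \<le> \<bar>real_of_int (n$i)\<bar>" by linarith
  thus ?thesis using abs_comp_le_inorm[of n i] by linarith
qed

lemma ball_sub:
  "{n::int^2. inorm n \<le> R} \<subseteq> (\<lambda>(a,b). vector [a,b]) ` ({-\<lfloor>R\<rfloor>..\<lfloor>R\<rfloor>} \<times> {-\<lfloor>R\<rfloor>..\<lfloor>R\<rfloor>})"
proof
  fix n :: "int^2" assume "n \<in> {n. inorm n \<le> R}"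
  hence h: "\<bar>real_of_int (n$i)\<bar> \<le> R" for i using abs_comp_le_inorm[of n i] by simp
  have "n$i \<in> {-\<lfloor>R\<rfloor>..\<lfloor>R\<rfloor>}" for i
  proof -
    have "n$i \<le> \<lfloor>R\<rfloor>" "-(n$i) \<le> \<lfloor>R\<rfloor>" using h[of i] by (auto simp: abs_le_iff le_floor_iff)
    thus ?thesis by auto
  qed
  moreover have "n = vector [n$1, n$2]"
    by (simp add: vec_eq_iff forall_2 vector_def)
  ultimately show "n \<in> (\<lambda>(a,b). vector [a,b]) ` ({-\<lfloor>R\<rfloor>..\<lfloor>R\<rfloor>} \<times> {-\<lfloor>R\<rfloor>..\<lfloor>R\<rfloor>})"
    by (intro image_eqI[where x="(n$1,n$2)"]) auto
qed

lemma ball_finite: "finite {n::int^2. inorm n \<le> R}"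
  by (rule finite_subset[OF ball_sub]) auto

lemma ball_card:
  assumes "R \<ge> 1"
  shows "real (card {n::int^2. inorm n \<le> R}) \<le> 9 * R^2"
proof -
  let ?I = "{-\<lfloor>R\<rfloor>..\<lfloor>R\<rfloor>}"
  have "card {n::int^2. inorm n \<le> R} \<le> card ((\<lambda>(a,b). vector [a,b]) ` (?I \<times> ?I) :: (int^2) set)"
    by (rule card_mono[OF _ ball_sub]) auto
  also have "\<dots> \<le> card (?I \<times> ?I)" by (rule card_image_le) auto
  also have "\<dots> = nat (2*\<lfloor>R\<rfloor>+1) * nat (2*\<lfloor>R\<rfloor>+1)" by (simp add: card_cartesian_product)
  finally have c: "real (card {n::int^2. inorm n \<le> R}) \<le> real (nat (2*\<lfloor>R\<rfloor>+1)) * real (nat (2*\<lfloor>R\<rfloor>+1))"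
    by (metis of_nat_le_iff of_nat_mult)
  have f0: "0 \<le> \<lfloor>R\<rfloor>" using assms by simp
  have "real (nat (2*\<lfloor>R\<rfloor>+1)) = 2 * real_of_int \<lfloor>R\<rfloor> + 1" using f0 by simp
  also have "\<dots> \<le> 3 * R" using assms of_int_floor_le[of R] by linarith
  finally have "real (nat (2*\<lfloor>R\<rfloor>+1)) \<le> 3*R" .
  hence "real (nat (2*\<lfloor>R\<rfloor>+1)) * real (nat (2*\<lfloor>R\<rfloor>+1)) \<le> (3*R)*(3*R)"
    by (intro mult_mono) auto
  thus ?thesis using c by (simp add: power2_eq_square)
qed

lemma TN_zero: "TN N \<kappa> 0 \<Psi> = \<Psi>"
  by (simp add: TN_def)

lemma inner_OpN:
  assumes "finite (coeff_supp s)"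
  shows "innerN N (OpN N \<kappa> s \<Psi>) \<Phi> = (\<Sum>n\<in>coeff_supp s. s n * innerN N (TN N \<kappa> n \<Psi>) \<Phi>)"
  unfolding innerN_def OpN_def
  by (simp add: sum_distrib_left sum_distrib_right sum.swap[of _ "coeff_supp s"] mult_ac)



lemma core:
  fixes a :: "int^2 \<Rightarrow> complex" and \<phi> :: "nat \<Rightarrow> int \<Rightarrow> complex" and r Dr c0 L p :: real
  assumes p1: "1 \<le> p" and N1: "1 \<le> N" and ortho: "\<forall>j\<in>{1..N}. innerN N (\<phi> j) (\<phi> j) = 1"
   and L0: "0 < L" and D1: "1 \<le> Dr" and r0: "0 < r"
   and a0: "pi * r^2 / 2 \<le> cmod (a 0)"
   and ab: "\<forall>n. cmod (a n) \<le> c0 * r^2"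
   and asupp: "\<forall>n. Dr \<le> inorm n \<longrightarrow> a n = 0"
  shows "real (card (Sset N \<kappa> \<phi> a L)) / real N
     \<le> ((2 * max c0 1 / pi) powr p * 9 powr (p-1)) * Dr powr (2*(p-1)) / L powr p *
       (\<Sum>n\<in>{n::int^2. 1 \<le> inorm n \<and> inorm n \<le> Dr}. Vp N \<kappa> \<phi> p n)"
proof -
  define K where "K = 2 * max c0 1 / pi"
  define B where "B = {n::int^2. 1 \<le> inorm n \<and> inorm n \<le> Dr}"
  define t where "t j n = innerN N (TN N \<kappa> n (\<phi> j)) (\<phi> j)" for j n
  define S where "S = Sset N \<kappa> \<phi> a L"
  have K0: "K > 0" by (simp add: K_def)
  have finB: "finite B" unfolding B_def by (rule finite_subset[OF _ ball_finite[of Dr]]) auto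
  have cardB: "real (card B) \<le> 9 * Dr^2"
  proof -
    have "card B \<le> card {n::int^2. inorm n \<le> Dr}"
      unfolding B_def by (rule card_mono[OF ball_finite]) auto
    thus ?thesis using ball_card[OF D1] by linarith
  qed
  have pr: "pi * r^2 / 2 > 0" using r0 by simp
  have a0ne: "a 0 \<noteq> 0" using a0 pr by auto
  have suppsub: "coeff_supp a \<subseteq> {n. inorm n \<le> Dr}"
  proof
    fix n assume "n \<in> coeff_supp a"
    hence "\<not> Dr \<le> inorm n" using asupp by (auto simp: coeff_supp_def)
    thus "n \<in> {n. inorm n \<le> Dr}" by simp
  qed
  have finS: "finite (coeff_supp a)" by (rule finite_subset[OF suppsub ball_finite])
  have zS: "0 \<in> coeff_supp a" using a0ne by (simp add: coeff_supp_def)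
  have supp_shift: "coeff_supp (shift_coeff a x) = coeff_supp a" for x
    by (simp add: coeff_supp_def shift_coeff_def)
  have shift0: "shift_coeff a x 0 = a 0" for x by (simp add: shift_coeff_def wedge_def)
  have norm_shift: "cmod (shift_coeff a x n) = cmod (a n)" for x n
    by (simp add: shift_coeff_def norm_mult norm_exp_eq_Re)
  have sub2: "coeff_supp a - {0} \<subseteq> B"
    using suppsub inorm_ge1 by (auto simp: B_def)
  have t0: "t j 0 = 1" if "j \<in> {1..N}" for j using ortho that by (simp add: t_def TN_zero)
  have c0r: "c0 * r^2 \<le> max c0 1 * r^2" using r0 by (intro mult_right_mono) auto
  have bound: "cmod (innerN N (OpN N \<kappa> (shift_coeff a x) (\<phi> j)) (\<phi> j) / mu (shift_coeff a x) - 1)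
       \<le> K * (\<Sum>n\<in>B. cmod (t j n))" if j: "j \<in> {1..N}" for j x
  proof -
    let ?s = "shift_coeff a x"
    define R where "R = (\<Sum>n\<in>coeff_supp a - {0}. ?s n * t j n)"
    have "innerN N (OpN N \<kappa> ?s (\<phi> j)) (\<phi> j) = (\<Sum>n\<in>coeff_supp a. ?s n * t j n)"
      using inner_OpN[of ?s N \<kappa> "\<phi> j" "\<phi> j"] finS by (simp add: supp_shift t_def)
    also have "\<dots> = ?s 0 * t j 0 + R" unfolding R_def by (rule sum.remove[OF finS zS])
    also have "\<dots> = a 0 + R" using t0[OF j] shift0 by simp
    finally have e: "innerN N (OpN N \<kappa> ?s (\<phi> j)) (\<phi> j) / mu ?s - 1 = R / a 0"
      using a0ne by (simp add: mu_def shift0 field_simps)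
    have "cmod R \<le> (\<Sum>n\<in>coeff_supp a - {0}. cmod (?s n * t j n))" unfolding R_def by (rule norm_sum)
    also have "\<dots> = (\<Sum>n\<in>coeff_supp a - {0}. cmod (a n) * cmod (t j n))" by (simp add: norm_mult norm_shift)
    also have "\<dots> \<le> (\<Sum>n\<in>coeff_supp a - {0}. max c0 1 * r^2 * cmod (t j n))"
      by (intro sum_mono mult_right_mono) (use ab c0r in \<open>auto intro: order_trans\<close>)
    also have "\<dots> = max c0 1 * r^2 * (\<Sum>n\<in>coeff_supp a - {0}. cmod (t j n))" by (simp add: sum_distrib_left)
    also have "\<dots> \<le> max c0 1 * r^2 * (\<Sum>n\<in>B. cmod (t j n))"
      by (intro mult_left_mono sum_mono2[OF finB sub2]) auto
    finally have cR: "cmod R \<le> max c0 1 * r^2 * (\<Sum>n\<in>B. cmod (t j n))" .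
    have "cmod (R / a 0) = cmod R / cmod (a 0)" by (simp add: norm_divide)
    also have "\<dots> \<le> (max c0 1 * r^2 * (\<Sum>n\<in>B. cmod (t j n))) / (pi * r^2 / 2)"
      by (rule frac_le) (use cR a0 pr in \<open>auto intro!: mult_nonneg_nonneg sum_nonneg\<close>)
    also have "\<dots> = K * (\<Sum>n\<in>B. cmod (t j n))" using r0 by (simp add: K_def field_simps)
    finally show ?thesis using e by simp
  qed
  have inS: "j \<in> {1..N} \<and> L \<le> K * (\<Sum>n\<in>B. cmod (t j n))" if "j \<in> S" for j
  proof -
    have j: "j \<in> {1..N}" and sup: "L \<le> (SUP x. cmod (innerN N (OpN N \<kappa> (shift_coeff a x) (\<phi> j)) (\<phi> j) / mu (shift_coeff a x) - 1))"
      using that by (auto simp: S_def Sset_def)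
    have "(SUP x. cmod (innerN N (OpN N \<kappa> (shift_coeff a x) (\<phi> j)) (\<phi> j) / mu (shift_coeff a x) - 1))
          \<le> K * (\<Sum>n\<in>B. cmod (t j n))"
      by (rule cSUP_least) (use bound[OF j] in auto)
    thus ?thesis using sup j by linarith
  qed
  define C where "C = K powr p * 9 powr (p-1) * Dr powr (2*(p-1))"
  have C0: "C \<ge> 0" by (simp add: C_def)
  have pw: "L powr p \<le> C * (\<Sum>n\<in>B. cmod (t j n) powr p)" if "j \<in> S" for j
  proof -
    have L: "L \<le> K * (\<Sum>n\<in>B. cmod (t j n))" using inS[OF that] by simp
    have "L powr p \<le> (K * (\<Sum>n\<in>B. cmod (t j n))) powr p"
      by (rule powr_mono2) (use p1 L0 L in auto)
    also have "\<dots> = K powr p * (\<Sum>n\<in>B. cmod (t j n)) powr p"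
      using K0 by (simp add: powr_mult sum_nonneg)
    also have "\<dots> \<le> K powr p * (real (card B) powr (p-1) * (\<Sum>n\<in>B. cmod (t j n) powr p))"
      by (intro mult_left_mono holder_sum[OF finB _ p1]) auto
    also have "\<dots> \<le> K powr p * ((9 * Dr^2) powr (p-1) * (\<Sum>n\<in>B. cmod (t j n) powr p))"
      by (intro mult_left_mono mult_right_mono powr_mono2 cardB) (use p1 in \<open>auto intro: sum_nonneg\<close>)
    also have "(9 * Dr^2) powr (p-1) = 9 powr (p-1) * Dr powr (2*(p-1))"
    proof -
      have "Dr powr (2*(p-1)) = (Dr powr 2) powr (p-1)" by (simp add: powr_powr)
      also have "Dr powr 2 = Dr^2" using D1 by (simp add: powr_numeral)
      finally show ?thesis by (simp add: powr_mult)
    qed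
    finally show ?thesis by (simp add: C_def mult_ac)
  qed
  have sS: "S \<subseteq> {1..N}" using inS by blast
  have finSS: "finite S" "S \<subseteq> {1..N}" using finite_subset[OF sS] sS by auto
  have Vpeq: "(\<Sum>j=1..N. cmod (t j n) powr p) = real N * Vp N \<kappa> \<phi> p n" if "n \<in> B" for n
  proof -
    have "n \<noteq> 0" using that by (auto simp: B_def inorm_def)
    thus ?thesis using N1 by (simp add: Vp_def t_def)
  qed
  have "real (card S) * L powr p = (\<Sum>j\<in>S. L powr p)" by simp
  also have "\<dots> \<le> (\<Sum>j\<in>S. C * (\<Sum>n\<in>B. cmod (t j n) powr p))" by (rule sum_mono) (rule pw)
  also have "\<dots> \<le> (\<Sum>j=1..N. C * (\<Sum>n\<in>B. cmod (t j n) powr p))"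
    by (rule sum_mono2) (use finSS C0 in \<open>auto intro!: mult_nonneg_nonneg sum_nonneg\<close>)
  also have "\<dots> = C * (\<Sum>n\<in>B. \<Sum>j=1..N. cmod (t j n) powr p)"
    by (simp add: sum_distrib_left) (rule sum.swap)
  also have "\<dots> = C * (\<Sum>n\<in>B. real N * Vp N \<kappa> \<phi> p n)" using Vpeq by simp
  also have "\<dots> = real N * (C * (\<Sum>n\<in>B. Vp N \<kappa> \<phi> p n))" by (simp add: sum_distrib_left mult_ac)
  finally have fin: "real (card S) * L powr p \<le> real N * (C * (\<Sum>n\<in>B. Vp N \<kappa> \<phi> p n))" .
  have Np: "real N > 0" using N1 by simp
  have Lp: "L powr p > 0" using L0 by simp
  have "real (card S) / real N \<le> C / L powr p * (\<Sum>n\<in>B. Vp N \<kappa> \<phi> p n)"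
    using fin Np Lp by (simp add: field_simps)
  thus ?thesis by (simp add: S_def C_def K_def B_def)
qed


theorem lemma3p3:
  fixes c0 C1 :: real
  shows "\<forall>p::real. 1 \<le> p \<longrightarrow> (\<exists>c>0. \<forall>(D::real \<Rightarrow> real) ap am.
           (\<forall>r>0. D r > 0) \<and> (\<lambda>r. 1 / D r) \<in> o[at_right 0](\<lambda>r. r) \<and>
           majorant_family c0 C1 D ap am \<longrightarrow>
           (\<forall>\<^sub>F r in at_right 0. \<forall>(N::nat) (\<kappa>::real^2) (M::int^2^2) U \<phi> (L::real).
              1 \<le> N \<and> hyperbolic_SL2Z M \<and> quantizes N \<kappa> M U \<and> eigenbasis N \<kappa> U \<phi> \<and> 0 < L \<longrightarrow>
              (\<forall>a\<in>{ap r, am r}.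
                 real (card (Sset N \<kappa> \<phi> a L)) / real N
                   \<le> c * D r powr (2 * (p - 1)) / L powr p *
                     (\<Sum>n\<in>{n::int^2. 1 \<le> inorm n \<and> inorm n \<le> D r}. Vp N \<kappa> \<phi> p n))))"
proof (intro allI impI)
  fix p :: real assume p1: "1 \<le> p"
  show "\<exists>c>0. \<forall>(D::real \<Rightarrow> real) ap am.
           (\<forall>r>0. D r > 0) \<and> (\<lambda>r. 1 / D r) \<in> o[at_right 0](\<lambda>r. r) \<and>
           majorant_family c0 C1 D ap am \<longrightarrow>
           (\<forall>\<^sub>F r in at_right 0. \<forall>(N::nat) (\<kappa>::real^2) (M::int^2^2) U \<phi> (L::real).
              1 \<le> N \<and> hyperbolic_SL2Z M \<and> quantizes N \<kappa> M U \<and> eigenbasis N \<kappa> U \<phi> \<and> 0 < L \<longrightarrow>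
              (\<forall>a\<in>{ap r, am r}.
                 real (card (Sset N \<kappa> \<phi> a L)) / real N
                   \<le> c * D r powr (2 * (p - 1)) / L powr p *
                     (\<Sum>n\<in>{n::int^2. 1 \<le> inorm n \<and> inorm n \<le> D r}. Vp N \<kappa> \<phi> p n)))"
  proof (intro exI[of _ "(2 * max c0 1 / pi) powr p * 9 powr (p-1)"] conjI allI impI)
    show "0 < (2 * max c0 1 / pi) powr p * 9 powr (p-1)" by simp
    fix D :: "real \<Rightarrow> real" and ap am :: "real \<Rightarrow> int^2 \<Rightarrow> complex"
    assume H: "(\<forall>r>0. D r > 0) \<and> (\<lambda>r. 1 / D r) \<in> o[at_right 0](\<lambda>r. r) \<and>
           majorant_family c0 C1 D ap am"
    have Dpos: "\<And>r. r > 0 \<Longrightarrow> D r > 0" using H by blast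
    have oo: "(\<lambda>r. 1 / D r) \<in> o[at_right 0](\<lambda>r. r)" using H by blast
    have mf: "majorant_family c0 C1 D ap am" using H by blast
    define e where "e = pi / (2 * (\<bar>C1\<bar> + 1))"
    have e0: "e > 0" by (simp add: e_def add_pos_nonneg)
    have eC: "\<bar>C1\<bar> * e \<le> pi / 2"
    proof -
      have "\<bar>C1\<bar> * e = (pi / 2) * (\<bar>C1\<bar> / (\<bar>C1\<bar> + 1))" by (simp add: e_def field_simps)
      also have "\<dots> \<le> (pi / 2) * 1"
        by (intro mult_left_mono) (auto simp: divide_le_eq_1)
      finally show ?thesis by simp
    qed
    have ev1: "\<forall>\<^sub>F r in at_right 0. norm (1 / D r) \<le> 1 * norm r"
      by (rule landau_o.smallD[OF oo]) simp
    have ev2: "\<forall>\<^sub>F r in at_right 0. norm (1 / D r) \<le> e * norm r"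
      by (rule landau_o.smallD[OF oo e0])
    have ev3: "\<forall>\<^sub>F r in at_right (0::real). 0 < r \<and> r \<le> 1/2"
      by (subst eventually_at_right[of 0 "1/2"]) (auto intro!: exI[of _ "1/2"])
    show "\<forall>\<^sub>F r in at_right 0. \<forall>(N::nat) (\<kappa>::real^2) (M::int^2^2) U \<phi> (L::real).
              1 \<le> N \<and> hyperbolic_SL2Z M \<and> quantizes N \<kappa> M U \<and> eigenbasis N \<kappa> U \<phi> \<and> 0 < L \<longrightarrow>
              (\<forall>a\<in>{ap r, am r}.
                 real (card (Sset N \<kappa> \<phi> a L)) / real N
                   \<le> (2 * max c0 1 / pi) powr p * 9 powr (p-1) * D r powr (2 * (p - 1)) / L powr p *
                     (\<Sum>n\<in>{n::int^2. 1 \<le> inorm n \<and> inorm n \<le> D r}. Vp N \<kappa> \<phi> p n))"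
      using ev1 ev2 ev3
    proof eventually_elim
      case (elim r)
      have r0: "0 < r" and rh: "r \<le> 1/2" using elim by auto
      have Dr: "D r > 0" using Dpos[OF r0] .
      have i1: "1 / D r \<le> r" using elim(1) r0 Dr by simp
      have i2: "1 / D r \<le> e * r" using elim(2) r0 Dr by simp
      have rD: "1 \<le> r * D r" using i1 Dr by (simp add: field_simps)
      have D1: "1 \<le> D r"
      proof -
        have "r * D r \<le> (1/2) * D r" by (rule mult_right_mono[OF rh]) (use Dr in simp)
        thus ?thesis using rD by linarith
      qed
      have C1b: "C1 * r / D r \<le> pi * r^2 / 2"
      proof -
        have "C1 * r / D r = C1 * r * (1 / D r)" by simp
        also have "\<dots> \<le> \<bar>C1\<bar> * r * (1 / D r)"
          by (intro mult_right_mono) (use r0 Dr in auto)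
        also have "\<dots> \<le> \<bar>C1\<bar> * r * (e * r)" by (intro mult_left_mono i2) (use r0 in auto)
        also have "\<dots> = (\<bar>C1\<bar> * e) * r^2" by (simp add: power2_eq_square mult_ac)
        also have "\<dots> \<le> (pi/2) * r^2" by (intro mult_right_mono eC) auto
        finally show ?thesis by simp
      qed
      have mfr: "(\<forall>n. D r \<le> inorm n \<longrightarrow> ap r n = 0 \<and> am r n = 0) \<and>
        cmod (ap r 0 - complex_of_real (pi * r^2)) \<le> C1 * r / D r \<and>
        cmod (am r 0 - complex_of_real (pi * r^2)) \<le> C1 * r / D r \<and>
        (\<forall>n. cmod (ap r n) \<le> c0 * r^2 \<and> cmod (am r n) \<le> c0 * r^2)"
        using mf r0 rh rD unfolding majorant_family_def by blast
      have a0b: "pi * r^2 / 2 \<le> cmod (b 0)" if "cmod (b 0 - complex_of_real (pi * r^2)) \<le> C1 * r / D r"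
        for b :: "int^2 \<Rightarrow> complex"
      proof -
        have "norm (complex_of_real (pi * r^2)) - norm (b 0) \<le> norm (complex_of_real (pi * r^2) - b 0)"
          by (rule norm_triangle_ineq2)
        also have "\<dots> = cmod (b 0 - complex_of_real (pi * r^2))" by (rule norm_minus_commute)
        finally have calc: "norm (complex_of_real (pi * r^2)) - norm (b 0) \<le> cmod (b 0 - complex_of_real (pi * r^2))" .
        have nn: "norm (complex_of_real (pi * r^2)) = pi * r^2" by (subst norm_of_real) simp
        have "pi * r^2 - cmod (b 0) \<le> C1 * r / D r" using calc nn that by linarith
        thus ?thesis using C1b by linarith
      qed
      have ap0: "pi * r^2 / 2 \<le> cmod (ap r 0)" using a0b mfr by blast
      have am0: "pi * r^2 / 2 \<le> cmod (am r 0)" using a0b mfr by blast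
      have apb: "\<forall>n. cmod (ap r n) \<le> c0 * r^2" using mfr by blast
      have amb: "\<forall>n. cmod (am r n) \<le> c0 * r^2" using mfr by blast
      have aps: "\<forall>n. D r \<le> inorm n \<longrightarrow> ap r n = 0" using mfr by blast
      have ams: "\<forall>n. D r \<le> inorm n \<longrightarrow> am r n = 0" using mfr by blast
      show ?case
      proof (intro allI impI)
        fix N :: nat and \<kappa> :: "real^2" and M :: "int^2^2" and U \<phi> and L :: real
        assume A: "1 \<le> N \<and> hyperbolic_SL2Z M \<and> quantizes N \<kappa> M U \<and> eigenbasis N \<kappa> U \<phi> \<and> 0 < L"
        have N1: "1 \<le> N" and L0: "0 < L" using A by auto
        have ortho: "\<forall>j\<in>{1..N}. innerN N (\<phi> j) (\<phi> j) = 1" using A by (simp add: eigenbasis_def)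
        have cap: "real (card (Sset N \<kappa> \<phi> (ap r) L)) / real N
            \<le> ((2 * max c0 1 / pi) powr p * 9 powr (p-1)) * D r powr (2*(p-1)) / L powr p *
              (\<Sum>n\<in>{n::int^2. 1 \<le> inorm n \<and> inorm n \<le> D r}. Vp N \<kappa> \<phi> p n)"
          by (rule core[OF p1 N1 ortho L0 D1 r0 ap0 apb aps])
        have cam: "real (card (Sset N \<kappa> \<phi> (am r) L)) / real N
            \<le> ((2 * max c0 1 / pi) powr p * 9 powr (p-1)) * D r powr (2*(p-1)) / L powr p *
              (\<Sum>n\<in>{n::int^2. 1 \<le> inorm n \<and> inorm n \<le> D r}. Vp N \<kappa> \<phi> p n)"
          by (rule core[OF p1 N1 ortho L0 D1 r0 am0 amb ams])
        show "\<forall>a\<in>{ap r, am r}.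
                 real (card (Sset N \<kappa> \<phi> a L)) / real N
                   \<le> (2 * max c0 1 / pi) powr p * 9 powr (p-1) * D r powr (2 * (p - 1)) / L powr p *
                     (\<Sum>n\<in>{n::int^2. 1 \<le> inorm n \<and> inorm n \<le> D r}. Vp N \<kappa> \<phi> p n)"
          using cap cam by auto
      qed
    qed
  qed
qed

end
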